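(* Let $n\ge3$ and $j\ge 0$. Then $\mathcal{N}_j=N_{\mathcal{B}}(\mathbb{Z}\mathcal{N}_{j-1})$, where $N_{\mathcal{B}}(\mathbb{Z}\mathcal{N}_{j-1})=\{b\in\mathcal{B}: [b,m]\in\mathbb{Z}\mathcal{N}_{j-1}\text{ for all } m\in\mathbb{Z}\mathcal{N}_{j-1}\}$ and $\mathbb{Z}\mathcal{N}_{j-1}$ denotes the $\mathbb{Z}$-span of $\mathcal{N}_{j-1}$ in $\mathfrak{L}(n)$.
   Context: Fix an integer $n\ge 3$. A partition is a sequence $\Lambda=(\lambda_j)_{j\ge1}$ of non-negative integers with finite support; $\mathrm{wt}(\Lambda)=\sum_j j\lambda_j$; $\mathrm{Part}(k)$ is the set of partitions with $\lambda_j=0$ for $j>k$. Write $x^\Lambda=\prod_j x_j^{\lambda_j}$, $\deg(x^\Lambda)=\sum_j\lambda_j$, and let $\partial_k$ be the partial derivative with respect to $x_k$. $\mathfrak{L}(n)$ is the free $\mathbb{Z}$-module with basis $\mathcal{B}=\{x^\Lambda\partial_k : 1\le k\le n,\ \Lambda\in\mathrm{Part}(k-1)\}$, a Lie ring with bracket defined on basis elements by $[x^\Lambda\partial_k,x^\Theta\partial_j]=\partial_j(x^\Lambda)x^\Theta\partial_k$ if $j<k$, $-x^\Lambda\partial_k(x^\Theta)\partial_j$ if $j>k$, $0$ if $j=k$, extended bilinearly. For an integer $i\ge-1$, let $r_i\in\{1,\dots,n-1\}$ with $i\equiv r_i\pmod{n-1}$ and $h_i=\lfloor (i-1)/(n-1)\rfloor+1$.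 Define $\mathrm{WD}(x^\Lambda\partial_k)=\mathrm{wt}(\Lambda)-\deg(x^\Lambda)+n-k$ and $\mathrm{lev}_i(x^\Lambda\partial_k)=h_i\,\mathrm{WD}(x^\Lambda\partial_k)+\deg(x^\Lambda)-1$. For $i\ge-1$, $\mathcal{N}_i=\{b\in\mathcal{B}: \mathrm{lev}_j(b)\le j\text{ for some integer } -1\le j\le i\}$. *)

theory Defs
  imports Main
begin

text \<open>Partitions: sequences (indexed from 1; index 0 unused and forced to 0) of
naturals with finite support.\<close>

type_synonym partition = "nat \<Rightarrow> nat"

definition psupp :: "partition \<Rightarrow> nat set" where
  "psupp L = {j. L j \<noteq> 0}"

definition is_partition :: "partition \<Rightarrow> bool" where
  "is_partition L \<longleftrightarrow> finite (psupp L) \<and> L 0 = 0"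

definition Part :: "nat \<Rightarrow> partition set" where
  "Part k = {L. is_partition L \<and> (\<forall>j. k < j \<longrightarrow> L j = 0)}"

definition wt :: "partition \<Rightarrow> nat" where
  "wt L = (\<Sum>j\<in>psupp L. j * L j)"

definition mdeg :: "partition \<Rightarrow> nat" where
  "mdeg L = (\<Sum>j\<in>psupp L. L j)"

text \<open>Basis element x^L d_k is represented by the pair (L, k).\<close>

type_synonym bas = "partition \<times> nat"

definition basisB :: "nat \<Rightarrow> bas set" where
  "basisB n = {(L, k). 1 \<le> k \<and> k \<le> n \<and> L \<in> Part (k - 1)}"

text \<open>Elements of the free Z-module on B: finitely supported integer coefficient
functions supported in B.\<close>

type_synonym vec = "bas \<Rightarrow> int"

definition vsupp :: "vec \<Rightarrow> bas set" where
  "vsupp v = {b. v b \<noteq> 0}"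

definition Lring :: "nat \<Rightarrow> vec set" where
  "Lring n = {v. finite (vsupp v) \<and> vsupp v \<subseteq> basisB n}"

definition unitv :: "bas \<Rightarrow> vec" where
  "unitv b = (\<lambda>d. if d = b then 1 else 0)"

definition padd :: "partition \<Rightarrow> partition \<Rightarrow> partition" where
  "padd L T = (\<lambda>i. L i + T i)"

text \<open>Bracket on basis elements:
  [x^L d_k, x^T d_j] = d_j(x^L) x^T d_k = L_j x^(L - e_j + T) d_k   if j < k,
                     = - x^L d_k(x^T) d_j = - T_k x^(L + T - e_k) d_j if j > k,
                     = 0 if j = k.\<close>

definition brb :: "bas \<Rightarrow> bas \<Rightarrow> vec" where
  "brb b c = (case b of (L, k) \<Rightarrow> case c of (T, j) \<Rightarrow>
     if j < k then (\<lambda>d. int (L j) * unitv (padd (L(j := L j - 1)) T, k) d)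
     else if k < j then (\<lambda>d. - int (T k) * unitv (padd L (T(k := T k - 1)), j) d)
     else (\<lambda>d. 0))"

definition lie :: "vec \<Rightarrow> vec \<Rightarrow> vec" where
  "lie u v = (\<lambda>d. \<Sum>b\<in>vsupp u. \<Sum>c\<in>vsupp v. u b * v c * brb b c d)"

definition zspan :: "bas set \<Rightarrow> vec set" where
  "zspan S = {v. finite (vsupp v) \<and> vsupp v \<subseteq> S}"

definition hh :: "nat \<Rightarrow> int \<Rightarrow> int" where
  "hh n i = (i - 1) div (int n - 1) + 1"

definition WD :: "nat \<Rightarrow> bas \<Rightarrow> int" where
  "WD n b = (case b of (L, k) \<Rightarrow> int (wt L) - int (mdeg L) + int n - int k)"

definition lev :: "nat \<Rightarrow> int \<Rightarrow> bas \<Rightarrow> int" where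
  "lev n i b = hh n i * WD n b + int (mdeg (fst b)) - 1"

definition NN :: "nat \<Rightarrow> int \<Rightarrow> bas set" where
  "NN n i = {b \<in> basisB n. \<exists>j. -1 \<le> j \<and> j \<le> i \<and> lev n j b \<le> j}"

definition normalizerB :: "nat \<Rightarrow> bas set \<Rightarrow> bas set" where
  "normalizerB n S = {b \<in> basisB n. \<forall>m\<in>zspan S. lie (unitv b) m \<in> zspan S}"

end

theory Submission
  imports Defs
begin


lemma hh_mono: "3 \<le> n \<Longrightarrow> i \<le> i' \<Longrightarrow> hh n i \<le> hh n i'"
  unfolding hh_def by (simp add: zdiv_mono1)

lemma hh_basic:
  assumes "3 \<le> n"
  shows "i \<le> hh n i * (int n - 1)" and "(hh n i - 1) * (int n - 1) < i"
proof -
  define m where "m = int n - 1"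
  have m: "2 \<le> m" using assms by (simp add: m_def)
  define q where "q = (i - 1) div m"
  define r where "r = (i - 1) mod m"
  have e: "i - 1 = m * q + r" unfolding q_def r_def by simp
  have r: "0 \<le> r" "r < m" using m by (auto simp: r_def)
  have hd: "hh n i = q + 1" by (simp add: hh_def m_def q_def)
  have x: "(q + 1) * m = m * q + m" "(q + 1 - 1) * m = m * q" by (simp_all add: algebra_simps)
  show "i \<le> hh n i * (int n - 1)" unfolding hd m_def[symmetric] x
    using e r by linarith
  show "(hh n i - 1) * (int n - 1) < i" unfolding hd m_def[symmetric] x
    using e r by linarith
qed

lemma hh_zero: "3 \<le> n \<Longrightarrow> -1 \<le> i \<Longrightarrow> i \<le> 0 \<Longrightarrow> hh n i = 0"
proof -
  assume a: "3 \<le> n" "-1 \<le> i" "i \<le> 0"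
  have "(i - 1) div (int n - 1) = -1"
    by (rule int_div_pos_eq[where r = "i - 1 + (int n - 1)"]) (use a in auto)
  then show ?thesis by (simp add: hh_def)
qed

lemma hh_pos: "3 \<le> n \<Longrightarrow> 1 \<le> i \<Longrightarrow> 1 \<le> hh n i"
  unfolding hh_def by (simp add: pos_imp_zdiv_nonneg_iff)

lemma hh_nonneg: "3 \<le> n \<Longrightarrow> -1 \<le> i \<Longrightarrow> 0 \<le> hh n i"
proof (cases "i \<le> 0")
  case False
  assume "3 \<le> n"
  then have "1 \<le> hh n i" using False by (intro hh_pos) auto
  then show ?thesis by simp
qed (auto simp: hh_zero)

lemma hh_pm: "3 \<le> n \<Longrightarrow> 0 \<le> p \<Longrightarrow> hh n (p * (int n - 1)) = p"
proof -
  assume a: "3 \<le> n" "0 \<le> p"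
  have "(p * (int n - 1) - 1) div (int n - 1) = p - 1"
    by (rule int_div_pos_eq[where r = "int n - 2"]) (use a in \<open>auto simp: algebra_simps\<close>)
  then show ?thesis by (simp add: hh_def)
qed

lemma arith_closure:
  fixes Wb Db Wc Dc m j j1 j2 :: int
  assumes n3: "3 \<le> n" and md: "m = int n - 1"
    and Wb0: "0 \<le> Wb" and Db0: "0 \<le> Db" and Wc0: "0 \<le> Wc" and Dc0: "0 \<le> Dc"
    and b0: "Db = 0 \<Longrightarrow> Wb \<le> m" and b1: "Db = 1 \<Longrightarrow> Wb \<le> m - 1"
    and c0: "Dc = 0 \<Longrightarrow> Wc \<le> m" and c1: "Dc = 1 \<Longrightarrow> Wc \<le> m - 1"
    and Wx: "0 \<le> Wb + Wc - m"
    and j1: "-1 \<le> j1" "j1 \<le> j" "hh n j1 * Wb + Db - 1 \<le> j1"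
    and j2: "-1 \<le> j2" "j2 \<le> j - 1" "hh n j2 * Wc + Dc - 1 \<le> j2"
  shows "\<exists>j3. -1 \<le> j3 \<and> j3 \<le> j - 1 \<and> hh n j3 * (Wb + Wc - m) + (Db + Dc - 1) - 1 \<le> j3"
proof -
  define h1 where "h1 = hh n j1"
  define h2 where "h2 = hh n j2"
  have h1ge: "0 \<le> h1" using hh_nonneg[OF n3 j1(1)] by (simp add: h1_def)
  have h2ge: "0 \<le> h2" using hh_nonneg[OF n3 j2(1)] by (simp add: h2_def)
  have j1le: "j1 \<le> h1 * m" using hh_basic(1)[OF n3, of j1] by (simp add: h1_def md)
  have j2le: "j2 \<le> h2 * m" using hh_basic(1)[OF n3, of j2] by (simp add: h2_def md)
  have L1: "h1 * Wb + Db - 1 \<le> j1" using j1 by (simp add: h1_def)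
  have L2: "h2 * Wc + Dc - 1 \<le> j2" using j2 by (simp add: h2_def)
  have eb: "h1 * Wb = h1 * (Wb - m) + h1 * m" by (simp add: algebra_simps)
  have ec: "h2 * Wc = h2 * (Wc - m) + h2 * m" by (simp add: algebra_simps)
  have Pb: "h1 * (Wb - m) + Db - 1 \<le> 0" using L1 j1le eb by linarith
  have Pc: "h2 * (Wc - m) + Dc - 1 \<le> 0" using L2 j2le ec by linarith
  consider (A) "j1 \<le> 0" | (B) "1 \<le> j1" "j2 \<le> 0" | (C) "1 \<le> j1" "1 \<le> j2" by linarith
  then show ?thesis
  proof cases
    case A
    have "h1 = 0" unfolding h1_def using hh_zero[OF n3 j1(1) A] .
    then have "Db \<le> 1" using L1 A by simp
    then have wb: "Wb - m \<le> 0" "Wb - m + Db \<le> 0" using b0 b1 Db0 by (cases "Db = 0"; auto)+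
    have "h2 * (Wb - m) \<le> 0" using h2ge wb by (simp add: mult_nonneg_nonpos)
    moreover have "h2 * (Wb + Wc - m) = h2 * Wc + h2 * (Wb - m)" by (simp add: algebra_simps)
    ultimately have "hh n j2 * (Wb + Wc - m) + (Db + Dc - 1) - 1 \<le> j2"
      using L2 wb \<open>Db \<le> 1\<close> unfolding h2_def[symmetric] by (cases "Db = 0") auto
    then show ?thesis using j2 by blast
  next
    case B
    have "h2 = 0" unfolding h2_def using hh_zero[OF n3 j2(1) B(2)] .
    then have "Dc \<le> 1" using L2 B by simp
    then have wc: "Wc - m \<le> - Dc" using c0 c1 Dc0 by (cases "Dc = 0"; auto)
    have h1p: "1 \<le> h1" unfolding h1_def using hh_pos[OF n3 B(1)] .
    have "h1 * (Wc - m) \<le> 1 * (Wc - m)"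
      by (rule mult_right_mono_neg) (use h1p wc Dc0 in auto)
    have hm: "hh n (j1 - 1) \<le> h1" unfolding h1_def by (rule hh_mono[OF n3]) simp
    have "hh n (j1 - 1) * (Wb + Wc - m) \<le> h1 * (Wb + Wc - m)"
      by (rule mult_right_mono[OF hm Wx])
    moreover have "h1 * (Wb + Wc - m) = h1 * Wb + h1 * (Wc - m)" by (simp add: algebra_simps)
    ultimately have "hh n (j1 - 1) * (Wb + Wc - m) + (Db + Dc - 1) - 1 \<le> j1 - 1"
      using L1 wc \<open>h1 * (Wc - m) \<le> 1 * (Wc - m)\<close> by simp
    then show ?thesis using B j1 by (intro exI[of _ "j1 - 1"]) auto
  next
    case C
    have h1p: "1 \<le> h1" unfolding h1_def using hh_pos[OF n3 C(1)] .
    have h2p: "1 \<le> h2" unfolding h2_def using hh_pos[OF n3 C(2)] .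
    have Wbm: "Wb \<le> m"
    proof (rule ccontr)
      assume "\<not> Wb \<le> m"
      then have "1 * 1 \<le> h1 * (Wb - m)" by (intro mult_mono) (use h1p in auto)
      then have "Db = 0" using Pb Db0 by linarith
      then show False using b0 \<open>\<not> Wb \<le> m\<close> by simp
    qed
    have Wcm: "Wc \<le> m"
    proof (rule ccontr)
      assume "\<not> Wc \<le> m"
      then have "1 * 1 \<le> h2 * (Wc - m)" by (intro mult_mono) (use h2p in auto)
      then have "Dc = 0" using Pc Dc0 by linarith
      then show False using c0 \<open>\<not> Wc \<le> m\<close> by simp
    qed
    show ?thesis
    proof (cases "h1 \<le> h2")
      case True
      have "h2 * (Wb - m) \<le> h1 * (Wb - m)"
        by (rule mult_right_mono_neg) (use True Wbm in auto)
      moreover have "h2 * (Wb + Wc - m) = h2 * Wc + h2 * (Wb - m)" by (simp add: algebra_simps)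
      ultimately have "hh n j2 * (Wb + Wc - m) + (Db + Dc - 1) - 1 \<le> j2"
        using L2 Pb unfolding h2_def[symmetric] by linarith
      then show ?thesis using j2 by blast
    next
      case False
      have cm: "h1 * (Wc - m) \<le> h2 * (Wc - m)"
        by (rule mult_right_mono_neg) (use False Wcm in auto)
      have ex: "h1 * (Wb + Wc - m) = h1 * Wb + h1 * (Wc - m)" by (simp add: algebra_simps)
      show ?thesis
      proof (cases "j1 \<le> j - 1")
        case True
        have "hh n j1 * (Wb + Wc - m) + (Db + Dc - 1) - 1 \<le> j1"
          using L1 Pc cm ex unfolding h1_def[symmetric] by linarith
        then show ?thesis using True j1 by blast
      next
        case False2: False
        have K: "h1 * (Wc - m) + Dc - 1 \<le> -1"
        proof (cases "Wc = m")
          case True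
          then have "Dc = 0" using Pc c1 Dc0 by (cases "Dc = 1") auto
          then show ?thesis using True by simp
        next
          case False3: False
          have "1 * 1 \<le> (h1 - h2) * (m - Wc)" by (intro mult_mono) (use False False3 Wcm in auto)
          moreover have "h1 * (Wc - m) = h2 * (Wc - m) - (h1 - h2) * (m - Wc)" by (simp add: algebra_simps)
          ultimately show ?thesis using Pc by linarith
        qed
        have hm: "hh n (j - 1) \<le> h1" unfolding h1_def by (rule hh_mono[OF n3]) (use False2 in simp)
        have "hh n (j - 1) * (Wb + Wc - m) \<le> h1 * (Wb + Wc - m)"
          by (rule mult_right_mono[OF hm Wx])
        then have "hh n (j - 1) * (Wb + Wc - m) + (Db + Dc - 1) - 1 \<le> j - 1"
          using L1 K ex j1 by linarith
        then show ?thesis using C j1 by (intro exI[of _ "j - 1"]) auto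
      qed
    qed
  qed
qed

lemma arith_witness:
  fixes W D j :: int
  assumes n3: "3 \<le> n" and j: "1 \<le> j"
    and nb: "\<And>j'. -1 \<le> j' \<Longrightarrow> j' \<le> j \<Longrightarrow> j' < hh n j' * W + D - 1"
    and jp: "-1 \<le> j'" "j' \<le> j - 1"
  shows "j' < hh n j' * (W - 1) + (D + (j - 1) div (int n - 1)) - 1"
proof -
  define p where "p = (j - 1) div (int n - 1)"
  have hj: "hh n j = p + 1" by (simp add: hh_def p_def)
  have hle: "hh n j' \<le> p + 1" using hh_mono[OF n3, of j' j] jp hj by simp
  have e: "hh n j' * (W - 1) = hh n j' * W - hh n j'" by (simp add: algebra_simps)
  show ?thesis
  proof (cases "hh n j' \<le> p")
    case True
    then show ?thesis using nb[of j'] jp e unfolding p_def[symmetric] by linarith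
  next
    case False
    have "hh n j' \<le> hh n (j' + 1)" by (rule hh_mono[OF n3]) simp
    moreover have "hh n (j' + 1) \<le> hh n j" by (rule hh_mono[OF n3]) (use jp in simp)
    ultimately have eq: "hh n (j' + 1) = hh n j'" using False hle hj by linarith
    have "j' + 1 < hh n (j' + 1) * W + D - 1" using nb[of "j' + 1"] jp by simp
    then show ?thesis using eq e False hle unfolding p_def[symmetric] by simp
  qed
qed



lemma Part_iff: "L \<in> Part k \<longleftrightarrow> L 0 = 0 \<and> (\<forall>j. k < j \<longrightarrow> L j = 0)"
proof
  assume h: "L 0 = 0 \<and> (\<forall>j. k < j \<longrightarrow> L j = 0)"
  have "psupp L \<subseteq> {..k}"
  proof
    fix j assume "j \<in> psupp L"
    then have "L j \<noteq> 0" by (simp add: psupp_def)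
    then show "j \<in> {..k}" using h by (cases "k < j") auto
  qed
  then have "finite (psupp L)" by (rule finite_subset) simp
  then show "L \<in> Part k" using h by (simp add: Part_def is_partition_def)
qed (simp add: Part_def is_partition_def)

lemma Part_mono: "q \<le> q' \<Longrightarrow> L \<in> Part q \<Longrightarrow> L \<in> Part q'"
  unfolding Part_iff by (meson le_less_trans)

lemma Part_le: "L \<in> Part k \<Longrightarrow> L j \<noteq> 0 \<Longrightarrow> j \<le> k"
  unfolding Part_iff by (meson not_le)

definition Sw :: "nat \<Rightarrow> partition \<Rightarrow> int" where
  "Sw N L = (\<Sum>i\<le>N. int i * int (L i))"
definition Sd :: "nat \<Rightarrow> partition \<Rightarrow> int" where
  "Sd N L = (\<Sum>i\<le>N. int (L i))"

lemma psupp_sub: "L \<in> Part k \<Longrightarrow> k \<le> N \<Longrightarrow> psupp L \<subseteq> {..N}"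
  unfolding psupp_def using Part_le by fastforce

lemma wt_Sw: "L \<in> Part k \<Longrightarrow> k \<le> N \<Longrightarrow> int (wt L) = Sw N L"
proof -
  assume a: "L \<in> Part k" "k \<le> N"
  have "wt L = (\<Sum>i\<in>{..N}. i * L i)" unfolding wt_def
    by (rule sum.mono_neutral_left) (use psupp_sub[OF a] in \<open>auto simp: psupp_def\<close>)
  then show ?thesis by (simp add: Sw_def)
qed

lemma mdeg_Sd: "L \<in> Part k \<Longrightarrow> k \<le> N \<Longrightarrow> int (mdeg L) = Sd N L"
proof -
  assume a: "L \<in> Part k" "k \<le> N"
  have "mdeg L = (\<Sum>i\<in>{..N}. L i)" unfolding mdeg_def
    by (rule sum.mono_neutral_left) (use psupp_sub[OF a] in \<open>auto simp: psupp_def\<close>)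
  then show ?thesis by (simp add: Sd_def)
qed

lemma padd_comm: "padd A B = padd B A"
  by (simp add: padd_def add.commute)

lemma padd_minus:
  assumes A: "A \<in> Part q" and B: "B \<in> Part q" and pos: "0 < B a" and qN: "q \<le> N"
  shows "padd A (B(a := B a - 1)) \<in> Part q"
    and "Sw N (padd A (B(a := B a - 1))) = Sw N A + Sw N B - int a"
    and "Sd N (padd A (B(a := B a - 1))) = Sd N A + Sd N B - 1"
proof -
  have aq: "a \<le> q"
  proof (rule ccontr)
    assume "\<not> a \<le> q" then have "B a = 0" using B by (simp add: Part_iff)
    then show False using pos by simp
  qed
  then have aN: "a \<in> {..N}" using qN by simp
  show "padd A (B(a := B a - 1)) \<in> Part q" using A B
    by (auto simp: Part_iff padd_def)
  have pt: "\<And>i. int (padd A (B(a := B a - 1)) i) = int (A i) + int (B i) - (if i = a then 1 else 0)"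
    using pos by (auto simp: padd_def of_nat_diff)
  have "Sw N (padd A (B(a := B a - 1))) = (\<Sum>i\<le>N. int i * int (A i) + int i * int (B i) - (if i = a then int i else 0))"
    unfolding Sw_def pt by (rule sum.cong) (auto simp: algebra_simps)
  also have "\<dots> = Sw N A + Sw N B - int a"
    using aN by (simp add: Sw_def sum.distrib sum_subtractf)
  finally show "Sw N (padd A (B(a := B a - 1))) = Sw N A + Sw N B - int a" .
  have "Sd N (padd A (B(a := B a - 1))) = (\<Sum>i\<le>N. int (A i) + int (B i) - (if i = a then 1 else 0))"
    unfolding Sd_def pt by simp
  also have "\<dots> = Sd N A + Sd N B - 1"
    using aN by (simp add: Sd_def sum.distrib sum_subtractf)
  finally show "Sd N (padd A (B(a := B a - 1))) = Sd N A + Sd N B - 1" .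
qed

lemma basis_iff: "(L, k) \<in> basisB n \<longleftrightarrow> 1 \<le> k \<and> k \<le> n \<and> L \<in> Part (k - 1)"
  by (simp add: basisB_def)

lemma WD_Sw: "(L, k) \<in> basisB n \<Longrightarrow> WD n (L, k) = Sw n L - Sd n L + int n - int k"
proof -
  assume "(L, k) \<in> basisB n"
  then have h: "L \<in> Part (k - 1)" "k - 1 \<le> n" by (auto simp: basis_iff)
  show ?thesis unfolding WD_def using wt_Sw[OF h] mdeg_Sd[OF h] by simp
qed

lemma mdeg_Sd': "(L, k) \<in> basisB n \<Longrightarrow> int (mdeg L) = Sd n L"
proof -
  assume "(L, k) \<in> basisB n"
  then have h: "L \<in> Part (k - 1)" "k - 1 \<le> n" by (auto simp: basis_iff)
  show ?thesis using mdeg_Sd[OF h] by simp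
qed

lemma basis_facts:
  assumes b: "(L, k) \<in> basisB n"
  shows "0 \<le> WD n (L, k)" and "mdeg L = 0 \<Longrightarrow> WD n (L, k) \<le> int n - 1"
    and "mdeg L = 1 \<Longrightarrow> WD n (L, k) \<le> int n - 2"
proof -
  have k: "1 \<le> k" "k \<le> n" "L \<in> Part (k - 1)" using b by (auto simp: basis_iff)
  have s1: "Sd n L \<le> Sw n L" unfolding Sd_def Sw_def
  proof (rule sum_mono)
    fix i assume "i \<in> {..n}"
    show "int (L i) \<le> int i * int (L i)"
    proof (cases "i = 0")
      case False
      have "1 * int (L i) \<le> int i * int (L i)" by (rule mult_right_mono) (use False in auto)
      then show ?thesis by simp
    qed (use k(3) in \<open>simp add: Part_iff\<close>)
  qed
  have s2: "Sw n L \<le> (int k - 1) * Sd n L" unfolding Sd_def Sw_def sum_distrib_left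
  proof (rule sum_mono)
    fix i assume "i \<in> {..n}"
    show "int i * int (L i) \<le> (int k - 1) * int (L i)"
    proof (cases "L i = 0")
      case False
      then have "i \<le> k - 1" using k(3) unfolding Part_iff by (meson not_le)
      then show ?thesis using k(1) by (intro mult_right_mono) auto
    qed simp
  qed
  have w: "WD n (L, k) = Sw n L - Sd n L + int n - int k" by (rule WD_Sw[OF b])
  have d: "int (mdeg L) = Sd n L" by (rule mdeg_Sd'[OF b])
  show "0 \<le> WD n (L, k)" using s1 w k by linarith
  show "mdeg L = 0 \<Longrightarrow> WD n (L, k) \<le> int n - 1" using s2 w k d by simp
  show "mdeg L = 1 \<Longrightarrow> WD n (L, k) \<le> int n - 2" using s2 w k d by simp
qed



lemma brb_lt_eq: "j < k \<Longrightarrow> brb (L, k) (T, j) = (\<lambda>d. int (L j) * unitv (padd (L(j := L j - 1)) T, k) d)"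
  unfolding brb_def by simp

lemma brb_gt_eq: "k < j \<Longrightarrow> brb (L, k) (T, j) = (\<lambda>d. - int (T k) * unitv (padd L (T(k := T k - 1)), j) d)"
  unfolding brb_def by simp

lemma brb_eq_eq: "brb (L, k) (T, k) = (\<lambda>d. 0)"
  unfolding brb_def by simp

lemma brb_lt:
  assumes b: "(L, k) \<in> basisB n" and c: "(T, j) \<in> basisB n" and jk: "j < k" and pos: "0 < L j"
  shows "brb (L, k) (T, j) = (\<lambda>d. int (L j) * unitv (padd T (L(j := L j - 1)), k) d)"
    and "(padd T (L(j := L j - 1)), k) \<in> basisB n"
    and "WD n (padd T (L(j := L j - 1)), k) = WD n (L, k) + WD n (T, j) - (int n - 1)"
    and "int (mdeg (padd T (L(j := L j - 1)))) = int (mdeg L) + int (mdeg T) - 1"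
proof -
  show "brb (L, k) (T, j) = (\<lambda>d. int (L j) * unitv (padd T (L(j := L j - 1)), k) d)"
    unfolding brb_lt_eq[OF jk] padd_comm[of "L(j := L j - 1)" T] by (rule refl)
  have L: "L \<in> Part (k - 1)" "1 \<le> k" "k \<le> n" using b by (auto simp: basis_iff)
  have T: "T \<in> Part (j - 1)" "1 \<le> j" using c by (auto simp: basis_iff)
  have T': "T \<in> Part (k - 1)" by (rule Part_mono[OF _ T(1)]) (use jk in simp)
  have kn: "k - 1 \<le> n" using L by simp
  note pm = padd_minus[OF T' L(1) pos kn]
  show bx: "(padd T (L(j := L j - 1)), k) \<in> basisB n" using pm(1) L by (simp add: basis_iff)
  show "WD n (padd T (L(j := L j - 1)), k) = WD n (L, k) + WD n (T, j) - (int n - 1)"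
    using WD_Sw[OF bx] WD_Sw[OF b] WD_Sw[OF c] pm(2,3) by linarith
  show "int (mdeg (padd T (L(j := L j - 1)))) = int (mdeg L) + int (mdeg T) - 1"
    using mdeg_Sd'[OF bx] mdeg_Sd'[OF b] mdeg_Sd'[OF c] pm(3) by linarith
qed

lemma brb_gt:
  assumes b: "(L, k) \<in> basisB n" and c: "(T, j) \<in> basisB n" and jk: "k < j" and pos: "0 < T k"
  shows "brb (L, k) (T, j) = (\<lambda>d. - int (T k) * unitv (padd L (T(k := T k - 1)), j) d)"
    and "(padd L (T(k := T k - 1)), j) \<in> basisB n"
    and "WD n (padd L (T(k := T k - 1)), j) = WD n (L, k) + WD n (T, j) - (int n - 1)"
    and "int (mdeg (padd L (T(k := T k - 1)))) = int (mdeg L) + int (mdeg T) - 1"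
proof -
  show "brb (L, k) (T, j) = (\<lambda>d. - int (T k) * unitv (padd L (T(k := T k - 1)), j) d)"
    using brb_gt_eq[OF jk] .
  have T: "T \<in> Part (j - 1)" "1 \<le> j" "j \<le> n" using c by (auto simp: basis_iff)
  have L: "L \<in> Part (k - 1)" "1 \<le> k" using b by (auto simp: basis_iff)
  have L': "L \<in> Part (j - 1)" by (rule Part_mono[OF _ L(1)]) (use jk in simp)
  have kn: "j - 1 \<le> n" using T by simp
  note pm = padd_minus[OF L' T(1) pos kn]
  show bx: "(padd L (T(k := T k - 1)), j) \<in> basisB n" using pm(1) T by (simp add: basis_iff)
  show "WD n (padd L (T(k := T k - 1)), j) = WD n (L, k) + WD n (T, j) - (int n - 1)"
    using WD_Sw[OF bx] WD_Sw[OF b] WD_Sw[OF c] pm(2,3) by linarith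
  show "int (mdeg (padd L (T(k := T k - 1)))) = int (mdeg L) + int (mdeg T) - 1"
    using mdeg_Sd'[OF bx] mdeg_Sd'[OF b] mdeg_Sd'[OF c] pm(3) by linarith
qed

definition good_br :: "nat \<Rightarrow> bas \<Rightarrow> bas \<Rightarrow> int \<Rightarrow> bas \<Rightarrow> bool" where
  "good_br n b c co x \<longleftrightarrow> co \<noteq> 0 \<and> brb b c = (\<lambda>d. co * unitv x d) \<and> x \<in> basisB n \<and>
     WD n x = WD n b + WD n c - (int n - 1) \<and>
     int (mdeg (fst x)) = int (mdeg (fst b)) + int (mdeg (fst c)) - 1"

lemma brb_cases:
  assumes b: "b \<in> basisB n" and c: "c \<in> basisB n"
  shows "brb b c = (\<lambda>d. 0) \<or> (\<exists>co x. good_br n b c co x)"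
proof -
  obtain L k where bk: "b = (L, k)" by (cases b)
  obtain T j where cj: "c = (T, j)" by (cases c)
  consider "j < k" | "k < j" | "j = k" by linarith
  then show ?thesis
  proof cases
    case 1
    show ?thesis
    proof (cases "L j = 0")
      case True then show ?thesis using brb_lt_eq[OF 1] by (simp add: bk cj)
    next
      case False
      then have "0 < L j" by simp
      note r = brb_lt[OF b[unfolded bk] c[unfolded cj] 1 this]
      have "good_br n (L, k) (T, j) (int (L j)) (padd T (L(j := L j - 1)), k)"
        unfolding good_br_def using r False by simp
      then show ?thesis unfolding bk cj by blast
    qed
  next
    case 2
    show ?thesis
    proof (cases "T k = 0")
      case True then show ?thesis using brb_gt_eq[OF 2] by (simp add: bk cj)
    next
      case False
      then have "0 < T k" by simp
      note r = brb_gt[OF b[unfolded bk] c[unfolded cj] 2 this]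
      have "good_br n (L, k) (T, j) (- int (T k)) (padd L (T(k := T k - 1)), j)"
        unfolding good_br_def using r False by simp
      then show ?thesis unfolding bk cj by blast
    qed
  next
    case 3 then show ?thesis by (simp add: bk cj brb_eq_eq)
  qed
qed



lemma vsupp_unitv: "vsupp (unitv b) = {b}"
  by (auto simp: vsupp_def unitv_def)

lemma unitv_zspan: "unitv c \<in> zspan S \<longleftrightarrow> c \<in> S"
  by (simp add: zspan_def vsupp_unitv)

lemma lie_unit: "lie (unitv b) m = (\<lambda>d. \<Sum>c\<in>vsupp m. m c * brb b c d)"
  unfolding lie_def vsupp_unitv by (simp add: unitv_def)

lemma lie_unit_unit: "lie (unitv b) (unitv c) = brb b c"
  unfolding lie_unit vsupp_unitv by (simp add: unitv_def)

lemma NN_iff: "b \<in> NN n i \<longleftrightarrow> b \<in> basisB n \<and>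
    (\<exists>j. -1 \<le> j \<and> j \<le> i \<and> hh n j * WD n b + int (mdeg (fst b)) - 1 \<le> j)"
  by (simp add: NN_def lev_def)

lemma basis_facts':
  assumes "b \<in> basisB n"
  shows "0 \<le> WD n b" and "mdeg (fst b) = 0 \<Longrightarrow> WD n b \<le> int n - 1"
    and "mdeg (fst b) = 1 \<Longrightarrow> WD n b \<le> int n - 2"
  using assms basis_facts[of "fst b" "snd b" n] by auto

lemma closure:
  assumes n3: "3 \<le> n" and b: "b \<in> NN n j" and c: "c \<in> NN n (j - 1)" and g: "good_br n b c co x"
  shows "x \<in> NN n (j - 1)"
proof -
  have bB: "b \<in> basisB n" and cB: "c \<in> basisB n" using b c by (auto simp: NN_iff)
  obtain j1 where j1: "-1 \<le> j1" "j1 \<le> j" "hh n j1 * WD n b + int (mdeg (fst b)) - 1 \<le> j1"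
    using b by (auto simp: NN_iff)
  obtain j2 where j2: "-1 \<le> j2" "j2 \<le> j - 1" "hh n j2 * WD n c + int (mdeg (fst c)) - 1 \<le> j2"
    using c by (auto simp: NN_iff)
  have xB: "x \<in> basisB n" and wx: "WD n x = WD n b + WD n c - (int n - 1)"
    and dx: "int (mdeg (fst x)) = int (mdeg (fst b)) + int (mdeg (fst c)) - 1"
    using g by (auto simp: good_br_def)
  have Wx: "0 \<le> WD n b + WD n c - (int n - 1)" using basis_facts'(1)[OF xB] wx by simp
  obtain j3 where j3: "-1 \<le> j3" "j3 \<le> j - 1"
    "hh n j3 * (WD n b + WD n c - (int n - 1)) + (int (mdeg (fst b)) + int (mdeg (fst c)) - 1) - 1 \<le> j3"
    using arith_closure[OF n3 refl basis_facts'(1)[OF bB] _ basis_facts'(1)[OF cB] _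
        _ _ _ _ Wx j1 j2] basis_facts'(2,3)[OF bB] basis_facts'(2,3)[OF cB] by fastforce
  show ?thesis unfolding NN_iff using xB j3 wx dx by (metis)
qed



definition tw :: "nat \<Rightarrow> nat \<Rightarrow> partition" where
  "tw p q = (\<lambda>i. (if i = 1 then p else 0) + (if i = q then 1 else 0))"

lemma tw_facts:
  assumes "1 \<le> q" "q \<le> q'" "q' \<le> N"
  shows "tw p q \<in> Part q'" and "Sw N (tw p q) = int p + int q" and "Sd N (tw p q) = int p + 1"
    and "0 < tw p q q"
proof -
  show "tw p q \<in> Part q'" using assms by (auto simp: Part_iff tw_def)
  have N1: "1 \<in> {..N}" "q \<in> {..N}" using assms by auto
  have "Sw N (tw p q) = (\<Sum>i\<le>N. (if i = 1 then int p else 0) + (if i = q then int q else 0))"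
    unfolding Sw_def by (rule sum.cong) (auto simp: tw_def)
  also have "\<dots> = int p + int q" using N1 by (simp add: sum.distrib)
  finally show "Sw N (tw p q) = int p + int q" .
  have "Sd N (tw p q) = (\<Sum>i\<le>N. (if i = 1 then int p else 0) + (if i = q then 1 else 0))"
    unfolding Sd_def by (rule sum.cong) (auto simp: tw_def)
  also have "\<dots> = int p + 1" using N1 by (simp add: sum.distrib)
  finally show "Sd N (tw p q) = int p + 1" .
  show "0 < tw p q q" by (simp add: tw_def)
qed

lemma zero_facts: "(\<lambda>_. 0) \<in> Part q" "Sw N (\<lambda>_. 0) = 0" "Sd N (\<lambda>_. 0) = 0"
  by (auto simp: Part_iff Sw_def Sd_def)

lemma wit_in:
  assumes n3: "3 \<le> n" and j: "1 \<le> j" and cB: "c \<in> basisB n" and wc: "WD n c = int n - 2"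
    and dc: "int (mdeg (fst c)) = (j - 1) div (int n - 1) + 1"
  shows "c \<in> NN n (j - 1)"
proof -
  define p where "p = (j - 1) div (int n - 1)"
  have p0: "0 \<le> p" using j n3 by (simp add: p_def pos_imp_zdiv_nonneg_iff)
  have hp: "hh n (p * (int n - 1)) = p" by (rule hh_pm[OF n3 p0])
  have dm: "(j - 1) div (int n - 1) * (int n - 1) + (j - 1) mod (int n - 1) = j - 1"
    by (rule div_mult_mod_eq)
  have "0 \<le> (j - 1) mod (int n - 1)" using n3 by simp
  then have le: "p * (int n - 1) \<le> j - 1" using dm unfolding p_def by linarith
  have "0 \<le> p * (int n - 1)" by (rule mult_nonneg_nonneg) (use p0 n3 in auto)
  then have ge: "-1 \<le> p * (int n - 1)" by linarith
  have "hh n (p * (int n - 1)) * WD n c + int (mdeg (fst c)) - 1 = p * (int n - 1)"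
    unfolding hp wc dc p_def[symmetric] by (simp add: algebra_simps)
  then show ?thesis unfolding NN_iff using cB le ge by (intro conjI exI[of _ "p * (int n - 1)"]) auto
qed

lemma wit_out:
  assumes n3: "3 \<le> n" and j: "1 \<le> j"
    and nb: "\<And>j'. -1 \<le> j' \<Longrightarrow> j' \<le> j \<Longrightarrow> j' < hh n j' * WD n b + int (mdeg (fst b)) - 1"
    and g: "good_br n b c co x" and wc: "WD n c = int n - 2"
    and dc: "int (mdeg (fst c)) = (j - 1) div (int n - 1) + 1"
  shows "x \<notin> NN n (j - 1)"
proof
  assume "x \<in> NN n (j - 1)"
  then obtain j' where j': "-1 \<le> j'" "j' \<le> j - 1" "hh n j' * WD n x + int (mdeg (fst x)) - 1 \<le> j'"
    by (auto simp: NN_iff)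
  have wx: "WD n x = WD n b - 1" and dx: "int (mdeg (fst x)) = int (mdeg (fst b)) + (j - 1) div (int n - 1)"
    using g wc dc by (auto simp: good_br_def)
  show False using arith_witness[OF n3 j nb j'(1,2)] j'(3) unfolding wx dx by linarith
qed

lemma witness:
  assumes n3: "3 \<le> n" and j0: "0 \<le> j" and bB: "b \<in> basisB n" and nb: "b \<notin> NN n j"
  shows "\<exists>c co x. c \<in> NN n (j - 1) \<and> good_br n b c co x \<and> x \<notin> NN n (j - 1)"
proof -
  obtain L k where bk: "b = (L, k)" by (cases b)
  have kb: "1 \<le> k" "k \<le> n" "L \<in> Part (k - 1)" using bB by (auto simp: bk basis_iff)
  have nb': "\<And>j'. -1 \<le> j' \<Longrightarrow> j' \<le> j \<Longrightarrow> j' < hh n j' * WD n b + int (mdeg (fst b)) - 1"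
    using nb bB unfolding NN_iff by (meson not_le)
  have "0 < hh n 0 * WD n b + int (mdeg (fst b)) - 1" using nb'[of 0] j0 by simp
  then have D2: "2 \<le> int (mdeg L)" using hh_zero[OF n3, of 0] by (simp add: bk)
  then have "psupp L \<noteq> {}" by (auto simp: mdeg_def)
  then obtain a where La: "L a \<noteq> 0" by (auto simp: psupp_def)
  have a1: "1 \<le> a" using La kb(3) by (cases a) (auto simp: Part_iff)
  have ak: "a < k" using Part_le[OF kb(3) La] kb(1) by simp
  have W0: "0 \<le> WD n b" by (rule basis_facts'(1)[OF bB])
  show ?thesis
  proof (cases "j = 0 \<or> WD n b = 0")
    case True
    define c where "c = ((\<lambda>_. 0) :: partition, a)"
    have cB: "((\<lambda>_. 0) :: partition, a) \<in> basisB n" using a1 ak kb by (auto simp: basis_iff zero_facts)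
    have wc: "WD n ((\<lambda>_. 0) :: partition, a) = int n - int a"
      using WD_Sw[OF cB] zero_facts by simp
    have dc: "mdeg ((\<lambda>_. 0) :: partition) = 0" by (simp add: mdeg_def psupp_def)
    have Lpos: "0 < L a" using La by simp
    note r = brb_lt[OF bB[unfolded bk] cB ak Lpos]
    define x where "x = (padd (\<lambda>_. 0) (L(a := L a - 1)), k)"
    have g: "good_br n b c (int (L a)) x" unfolding good_br_def c_def x_def bk using r La dc by simp
    have cN: "c \<in> NN n (j - 1)" unfolding NN_iff c_def using cB j0 hh_zero[OF n3, of "-1"] dc
      by (intro conjI exI[of _ "-1"]) auto
    have xB: "x \<in> basisB n" using r(2) by (simp add: x_def)
    have wx: "WD n x = WD n b + 1 - int a" using r(3) wc by (simp add: x_def bk)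
    have dx: "int (mdeg (fst x)) = int (mdeg (fst b)) - 1" using r(4) dc by (simp add: x_def bk)
    have xN: "x \<notin> NN n (j - 1)"
    proof
      assume "x \<in> NN n (j - 1)"
      then obtain j' where j': "-1 \<le> j'" "j' \<le> j - 1" "hh n j' * WD n x + int (mdeg (fst x)) - 1 \<le> j'"
        by (auto simp: NN_iff)
      show False
      proof (cases "j = 0")
        case True
        then have "j' = -1" using j' by simp
        then show False using j' hh_zero[OF n3, of "-1"] dx D2 by (simp add: bk)
      next
        case False
        then have "WD n b = 0" using \<open>j = 0 \<or> WD n b = 0\<close> by simp
        then have "WD n x = 0" using wx a1 basis_facts'(1)[OF xB] by simp
        then show False using j' nb'[of j] j0 dx \<open>WD n b = 0\<close> by simp
      qed
    qed
    show ?thesis using cN g xN by blast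
  next
    case False
    then have j1: "1 \<le> j" and W1: "1 \<le> WD n b" using j0 W0 by auto
    define p where "p = nat ((j - 1) div (int n - 1))"
    have pi: "int p = (j - 1) div (int n - 1)" unfolding p_def using j1 n3
      by (simp add: pos_imp_zdiv_nonneg_iff)
    show ?thesis
    proof (cases "\<exists>a'. 2 \<le> a' \<and> 0 < L a'")
      case True
      then obtain a' where a': "2 \<le> a'" "0 < L a'" by blast
      have ak': "a' < k" using Part_le[OF kb(3), of a'] a' kb(1) by simp
      note tf = tw_facts[of "a' - 1" "a' - 1" n p]
      have cB: "(tw p (a' - 1), a') \<in> basisB n" using tf a' ak' kb by (auto simp: basis_iff)
      have wc: "WD n (tw p (a' - 1), a') = int n - 2" using WD_Sw[OF cB] tf a' ak' kb by simp
      have dc: "int (mdeg (fst (tw p (a' - 1), a'))) = (j - 1) div (int n - 1) + 1"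
        using mdeg_Sd'[OF cB] tf a' ak' kb pi by simp
      note r = brb_lt[OF bB[unfolded bk] cB ak' a'(2)]
      have g: "good_br n b (tw p (a' - 1), a') (int (L a')) (padd (tw p (a' - 1)) (L(a' := L a' - 1)), k)"
        unfolding good_br_def bk using r a' by simp
      show ?thesis using wit_in[OF n3 j1 cB wc dc] wit_out[OF n3 j1 nb' g wc dc] g by blast
    next
      case False
      have kn: "k < n"
      proof (rule ccontr)
        assume "\<not> k < n"
        then have kn: "k = n" using kb by simp
        have "Sw n L = Sd n L" unfolding Sw_def Sd_def
        proof (rule sum.cong)
          fix i assume "i \<in> {..n}"
          show "int i * int (L i) = int (L i)"
          proof (cases "L i = 0")
            case False
            have "i < 2"
            proof (rule ccontr)
              assume "\<not> i < 2"
              then have "2 \<le> i" by simp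
              then show False using False \<open>\<not> (\<exists>a'. 2 \<le> a' \<and> 0 < L a')\<close> by auto
            qed
            moreover have "i \<noteq> 0"
            proof
              assume "i = 0"
              then show False using False kb(3) by (simp add: Part_iff)
            qed
            ultimately show ?thesis by (cases i) auto
          qed simp
        qed simp
        then have "WD n b = 0" using WD_Sw[OF bB[unfolded bk]] kn by (simp add: bk)
        then show False using W1 by simp
      qed
      note tf = tw_facts[of k k n p]
      have cB: "(tw p k, k + 1) \<in> basisB n" using tf kn kb by (auto simp: basis_iff)
      have wc: "WD n (tw p k, k + 1) = int n - 2" using WD_Sw[OF cB] tf kn kb by simp
      have dc: "int (mdeg (fst (tw p k, k + 1))) = (j - 1) div (int n - 1) + 1"
        using mdeg_Sd'[OF cB] tf kn kb pi by simp
      have kk: "k < k + 1" by simp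
      have Tk: "0 < tw p k k" using tf kb by simp
      note r = brb_gt[OF bB[unfolded bk] cB kk Tk]
      have g: "good_br n b (tw p k, k + 1) (- int (tw p k k)) (padd L ((tw p k)(k := tw p k k - 1)), k + 1)"
        unfolding good_br_def bk using r Tk by simp
      show ?thesis using wit_in[OF n3 j1 cB wc dc] wit_out[OF n3 j1 nb' g wc dc] g by blast
    qed
  qed
qed



lemma brb_supp:
  assumes "b \<in> basisB n" "c \<in> basisB n"
  shows "finite (vsupp (brb b c))"
  using brb_cases[OF assms]
proof
  assume "brb b c = (\<lambda>d. 0)" then show ?thesis by (simp add: vsupp_def)
next
  assume "\<exists>co x. good_br n b c co x"
  then obtain co x where "brb b c = (\<lambda>d. co * unitv x d)" by (auto simp: good_br_def)
  then have "vsupp (brb b c) \<subseteq> {x}" by (auto simp: vsupp_def unitv_def)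
  then show ?thesis using finite_subset by blast
qed

theorem proposition3p3:
  fixes n :: nat and j :: int
  assumes "3 \<le> n" and "0 \<le> j"
  shows "NN n j = normalizerB n (NN n (j - 1))"
proof (intro equalityI subsetI)
  let ?S = "NN n (j - 1)"
  have SB: "?S \<subseteq> basisB n" by (auto simp: NN_def)
  fix b
  {
    assume b: "b \<in> NN n j"
    have bB: "b \<in> basisB n" using b by (simp add: NN_def)
    have each: "d \<in> ?S" if c: "c \<in> ?S" and d: "brb b c d \<noteq> 0" for c d
    proof -
      have cB: "c \<in> basisB n" using c SB by auto
      from brb_cases[OF bB cB] show ?thesis
      proof
        assume "brb b c = (\<lambda>d. 0)" then show ?thesis using d by simp
      next
        assume "\<exists>co x. good_br n b c co x"
        then obtain co x where g: "good_br n b c co x" by blast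
        then have "d = x" using d by (auto simp: good_br_def unitv_def split: if_splits)
        then show ?thesis using closure[OF assms(1) b c g] by simp
      qed
    qed
    show "b \<in> normalizerB n ?S" unfolding normalizerB_def
    proof (intro CollectI conjI ballI bB)
      fix m assume m: "m \<in> zspan ?S"
      have ms: "vsupp m \<subseteq> ?S" "finite (vsupp m)" using m by (auto simp: zspan_def)
      have sub: "vsupp (lie (unitv b) m) \<subseteq> (\<Union>c\<in>vsupp m. vsupp (brb b c))"
      proof
        fix d assume "d \<in> vsupp (lie (unitv b) m)"
        then have "(\<Sum>c\<in>vsupp m. m c * brb b c d) \<noteq> 0" by (simp add: vsupp_def lie_unit)
        then obtain c where c: "c \<in> vsupp m" "m c * brb b c d \<noteq> 0"
          by (meson sum.not_neutral_contains_not_neutral)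
        then have "d \<in> vsupp (brb b c)" by (simp add: vsupp_def)
        then show "d \<in> (\<Union>c\<in>vsupp m. vsupp (brb b c))" using c(1) by blast
      qed
      have fin: "finite (\<Union>c\<in>vsupp m. vsupp (brb b c))"
      proof (rule finite_UN_I)
        show "finite (vsupp m)" by (rule ms(2))
        fix c assume "c \<in> vsupp m"
        then have "c \<in> basisB n" using ms(1) SB by blast
        then show "finite (vsupp (brb b c))" by (rule brb_supp[OF bB])
      qed
      have un: "(\<Union>c\<in>vsupp m. vsupp (brb b c)) \<subseteq> ?S"
      proof
        fix d assume "d \<in> (\<Union>c\<in>vsupp m. vsupp (brb b c))"
        then obtain c where c: "c \<in> vsupp m" "d \<in> vsupp (brb b c)" by blast
        then have "brb b c d \<noteq> 0" by (simp add: vsupp_def)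
        moreover have "c \<in> ?S" using c(1) ms(1) by blast
        ultimately show "d \<in> ?S" by (rule each[rotated])
      qed
      show "lie (unitv b) m \<in> zspan ?S" unfolding zspan_def
        by (intro CollectI conjI finite_subset[OF sub fin] order_trans[OF sub un])
    qed
  }
  {
    assume b: "b \<in> normalizerB n ?S"
    have bB: "b \<in> basisB n" using b by (simp add: normalizerB_def)
    show "b \<in> NN n j"
    proof (rule ccontr)
      assume "b \<notin> NN n j"
      then obtain c co x where c: "c \<in> ?S" and g: "good_br n b c co x" and x: "x \<notin> ?S"
        using witness[OF assms bB] by blast
      have "lie (unitv b) (unitv c) \<in> zspan ?S"
        using b c unitv_zspan[of c ?S] by (simp add: normalizerB_def)
      then have "vsupp (brb b c) \<subseteq> ?S" by (simp add: lie_unit_unit zspan_def)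
      moreover have "x \<in> vsupp (brb b c)" using g by (simp add: good_br_def vsupp_def unitv_def)
      ultimately show False using x by blast
    qed
  }
qed


end
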